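(* Let $\alpha\in\mathbb{R}$ with $\alpha\neq 1$. Then for every $\beta\in\mathbb{R}$, the sequence $\{k^2+\alpha k+\beta\}_{k=0}^{\infty}$ is not a Legendre multiplier sequence.
   Context: The Legendre polynomials $\mathfrak{Le}_n(x)$ are defined by $\frac{1}{\sqrt{1-2xt+t^2}}=\sum_{k=0}^{\infty}\mathfrak{Le}_k(x)t^k$. A real sequence $\{\gamma_k\}_{k=0}^{\infty}$ is a Legendre multiplier sequence if, for every $n$ and all real $a_0,\dots,a_n$, the polynomial $\sum_{k=0}^n a_k\gamma_k\mathfrak{Le}_k(x)$ has only real zeros whenever $\sum_{k=0}^n a_k\mathfrak{Le}_k(x)$ has only real zeros. *)

theory Defs
  imports "HOL-Analysis.Analysis" "HOL-Computational_Algebra.Computational_Algebra"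
begin

text \<open>Legendre polynomials via the formal expansion of the generating function
  (1 - 2xt + t^2)^(-1/2) = (1+u)^(-1/2) with u = -2xt + t^2, i.e.
  sum over j of ((-1/2) gchoose j) u^j; the coefficient of t^k is the k-th polynomial
  (only j \<le> k contribute, since u has no constant term in t).\<close>
definition legendre_gen_u :: "real poly fps" where
  "legendre_gen_u = fps_const (smult (-2) [:0, 1:]) * fps_X + fps_X ^ 2"

definition Le :: "nat \<Rightarrow> real poly" where
  "Le k = (\<Sum>j\<le>k. smult ((-1/2 :: real) gchoose j) (fps_nth (legendre_gen_u ^ j) k))"

definition only_real_zeros :: "real poly \<Rightarrow> bool" where
  "only_real_zeros p \<longleftrightarrow>
     p = 0 \<or> (\<forall>z::complex. poly (map_poly complex_of_real p) z = 0 \<longrightarrow> z \<in> \<real>)"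

definition legendre_multiplier_sequence :: "(nat \<Rightarrow> real) \<Rightarrow> bool" where
  "legendre_multiplier_sequence \<gamma> \<longleftrightarrow>
     (\<forall>(n::nat) (a::nat \<Rightarrow> real).
        only_real_zeros (\<Sum>k\<le>n. smult (a k) (Le k)) \<longrightarrow>
        only_real_zeros (\<Sum>k\<le>n. smult (a k * \<gamma> k) (Le k)))"

end

theory Submission imports Defs begin
lemma unth: "fps_nth (legendre_gen_u ^ j) k = (if j \<le> k then of_nat (j choose (k-j)) * [:0,-2:]^(j-(k-j)) else 0)"
proof -
  have u: "legendre_gen_u ^ j = fps_X ^ j * (fps_const [:0,-2:] + fps_X) ^ j"
  proof -
    have "legendre_gen_u = fps_X * (fps_const [:0,-2:] + fps_X)"
      unfolding legendre_gen_u_def by (simp add: power2_eq_square algebra_simps)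
    then show ?thesis by (metis power_mult_distrib)
  qed
  have b: "fps_nth ((fps_const (c::real poly) + fps_X)^j) m = of_nat (j choose m) * c^(j-m)" for c j m
  proof (induction j arbitrary: m)
    case 0 then show ?case by simp
  next
    case (Suc j)
    show ?case
    proof (cases m)
      case 0 then show ?thesis using Suc by (simp add: fps_mult_nth)
    next
      case (Suc m')
      have "(fps_const c + fps_X)^Suc j = fps_const c * (fps_const c + fps_X)^j + fps_X * (fps_const c + fps_X)^j"
        by (simp add: algebra_simps)
      note eq = this
      have "fps_nth ((fps_const c + fps_X)^Suc j) m = c * (of_nat (j choose m) * c^(j-m)) + of_nat (j choose m') * c^(j-m')"
        unfolding eq fps_add_nth fps_mult_left_const_nth fps_X_mult_nth using Suc.IH \<open>m = Suc m'\<close> by simp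
      also have "\<dots> = of_nat (Suc j choose m) * c ^ (Suc j - m)"
      proof (cases "m \<le> j")
        case True
        then have "c * c^(j-m) = c^(j-m')" using \<open>m = Suc m'\<close>
          by (metis Suc_diff_le le_SucE power_Suc diff_Suc_Suc Suc_leD)
        then show ?thesis using \<open>m = Suc m'\<close> True by (simp add: algebra_simps)
      next
        case False
        then show ?thesis using \<open>m = Suc m'\<close> by (simp add: binomial_eq_0)
      qed
      finally show ?thesis .
    qed
  qed
  show ?thesis unfolding u by (simp add: fps_X_power_mult_nth b)
qed
lemma gb: "((-1/2::real) gchoose 0) = 1" "((-1/2::real) gchoose 1) = -1/2" "((-1/2::real) gchoose 2) = 3/8"
   "((-1/2::real) gchoose 3) = -5/16" "((-1/2::real) gchoose 4) = 35/128"
  by (simp_all add: gbinomial_Suc numeral_eq_Suc)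
lemma gbS: "((- (1 / 2)::real) gchoose Suc 0) = -1/2" "((- (1 / 2)::real) gchoose Suc (Suc 0)) = 3/8"
   "((- (1 / 2)::real) gchoose Suc (Suc (Suc 0))) = -5/16" "((- (1 / 2)::real) gchoose Suc (Suc (Suc (Suc 0)))) = 35/128"
  using gb by (simp_all add: numeral_eq_Suc)
lemma Le0: "Le 0 = 1" by (simp add: Le_def unth)
lemma Le1: "Le 1 = [:0,1:]" by (simp add: Le_def unth gb)
lemma Le1': "Le (Suc 0) = [:0,1:]" using Le1 by simp
lemma Le2: "Le 2 = [:-1/2,0,3/2:]" by (simp add: Le_def unth gbS numeral_eq_Suc numeral_poly one_pCons)
lemma Le3: "Le 3 = [:0,-3/2,0,5/2:]" by (simp add: Le_def unth gbS numeral_eq_Suc numeral_poly one_pCons)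
lemma Le4: "Le 4 = [:3/8,0,-30/8,0,35/8:]" by (simp add: Le_def unth gbS numeral_eq_Suc numeral_poly one_pCons)

lemma mapc_mult: "map_poly complex_of_real (p*q) = map_poly of_real p * map_poly of_real q"
  by (simp add: poly_eq_iff coeff_map_poly coeff_mult)
lemma poly_mapc_real: "poly (map_poly complex_of_real p) (of_real x) = of_real (poly p x)"
  by (induction p) (auto simp: map_poly_pCons)
lemma realroot_L:
  fixes Q :: "real poly"
  assumes "\<forall>z. poly (map_poly complex_of_real Q) z = 0 \<longrightarrow> z \<in> \<real>"
  shows "poly Q x * poly (pderiv (pderiv Q)) x \<le> (poly (pderiv Q) x)^2"
  using assms
proof (induction "degree Q" arbitrary: Q rule: less_induct)
  case less
  show ?case
  proof (cases "degree Q = 0")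
    case True
    then obtain c where "Q = [:c:]" by (metis degree_eq_zeroE)
    then show ?thesis by simp
  next
    case False
    have dm: "degree (map_poly complex_of_real Q) = degree Q"
      by (simp add: degree_map_poly)
    have "\<not> constant (poly (map_poly complex_of_real Q))"
      using False dm by (simp add: constant_degree)
    then obtain z where z: "poly (map_poly complex_of_real Q) z = 0"
      using fundamental_theorem_of_algebra by blast
    then have "z \<in> \<real>" using less.prems by blast
    then obtain r where zr: "z = of_real r" by (metis Reals_cases)
    have "poly Q r = 0" using z zr poly_mapc_real by (metis of_real_eq_0_iff)
    then obtain P where QP: "Q = [:-r,1:] * P" using poly_eq_0_iff_dvd by (metis dvdE)
    have "P \<noteq> 0" using False QP by auto
    then have dP: "degree Q = degree P + 1" proof -
      have "degree ([:-r,1:] * P) = degree [:-r,1:] + degree P"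
        by (rule degree_mult_eq) (use \<open>P \<noteq> 0\<close> in auto)
      then show ?thesis using QP by simp
    qed
    have "poly (map_poly complex_of_real P) w = 0 \<longrightarrow> w \<in> \<real>" for w
    proof
      assume "poly (map_poly complex_of_real P) w = 0"
      then have "poly (map_poly complex_of_real Q) w = 0"
        unfolding QP mapc_mult by simp
      then show "w \<in> \<real>" using less.prems by blast
    qed
    then have IH: "poly P x * poly (pderiv (pderiv P)) x \<le> (poly (pderiv P) x)^2"
      using less.hyps dP by auto
    have "(poly (pderiv Q) x)^2 - poly Q x * poly (pderiv (pderiv Q)) x
       = (poly P x)^2 + (x - r)^2 * ((poly (pderiv P) x)^2 - poly P x * poly (pderiv (pderiv P)) x)"
    proof -
      have d1: "pderiv Q = P + [:-r,1:] * pderiv P" unfolding QP pderiv_mult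
        by (simp add: pderiv_pCons)
      have d2: "pderiv (pderiv Q) = smult 2 (pderiv P) + [:-r,1:] * pderiv (pderiv P)" unfolding d1 pderiv_add pderiv_mult
        by (simp add: pderiv_pCons algebra_simps smult_add_left[symmetric] numeral_poly del: smult_add_left)
      show ?thesis unfolding d2 unfolding d1 unfolding QP by (simp add: algebra_simps power2_eq_square)
    qed
    moreover have "0 \<le> (poly P x)^2 + (x - r)^2 * ((poly (pderiv P) x)^2 - poly P x * poly (pderiv (pderiv P)) x)"
      using IH by simp
    ultimately show ?thesis by linarith
  qed
qed

lemma sum4: "(\<Sum>k\<le>(4::nat). f k) = f 0 + f 1 + f 2 + f 3 + (f 4 :: 'a::comm_monoid_add)"
  by (simp add: numeral_eq_Suc atMost_Suc add_ac)

theorem proposition4p5: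
  fixes \<alpha> :: real
  assumes "\<alpha> \<noteq> 1"
  shows "\<forall>\<beta>::real. \<not> legendre_multiplier_sequence (\<lambda>k. real k ^ 2 + \<alpha> * real k + \<beta>)"
proof (intro allI notI)
  fix \<beta> :: real
  let ?g = "\<lambda>k. real k ^ 2 + \<alpha> * real k + \<beta>"
  assume lms: "legendre_multiplier_sequence ?g"
  define a :: "nat \<Rightarrow> real" where "a = (\<lambda>k. if k = 0 then 16/5 else if k = 1 then -32/5 else if k = 2 then 32/7
     else if k = 3 then -8/5 else 8/35)"
  have P: "(\<Sum>k\<le>4. smult (a k) (Le k)) = [:1,-4,6,-4,1:]"
    unfolding sum4 a_def by (simp add: Le0 Le1 Le1' Le2 Le3 Le4)
  have "only_real_zeros (\<Sum>k\<le>4. smult (a k) (Le k))"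
    unfolding P only_real_zeros_def
  proof (intro disjI2 allI impI)
    fix z :: complex
    assume "poly (map_poly complex_of_real [:1,-4,6,-4,1:]) z = 0"
    then have "(z - 1)^4 = 0" by (simp add: map_poly_pCons algebra_simps power_numeral_reduce numeral_eq_Suc)
    then have "z = 1" by simp
    then show "z \<in> \<real>" by simp
  qed
  then have "only_real_zeros (\<Sum>k\<le>4. smult (a k * ?g k) (Le k))"
    using lms unfolding legendre_multiplier_sequence_def by blast
  moreover define Q where "Q = (\<Sum>k\<le>4. smult (a k * ?g k) (Le k))"
  ultimately have R: "Q = 0 \<or> (\<forall>z. poly (map_poly complex_of_real Q) z = 0 \<longrightarrow> z \<in> \<real>)"
    unfolding only_real_zeros_def by auto
  have L: "poly Q 1 * poly (pderiv (pderiv Q)) 1 \<le> (poly (pderiv Q) 1)^2"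
    using R proof
    assume "Q = 0" then show ?thesis by simp
  next
    assume "\<forall>z. poly (map_poly complex_of_real Q) z = 0 \<longrightarrow> z \<in> \<real>"
    then show ?thesis by (rule realroot_L)
  qed
  have q0: "poly Q 1 = -8/7 * (\<alpha> - 1)"
    unfolding Q_def sum4 a_def by (simp add: Le0 Le1 Le1' Le2 Le3 Le4 algebra_simps) (simp add: field_simps)
  have q1: "poly (pderiv Q) 1 = 48/35 * (\<alpha> - 1)"
    unfolding Q_def sum4 a_def by (simp add: Le0 Le1 Le1' Le2 Le3 Le4 algebra_simps pderiv_add pderiv_smult pderiv_pCons) (simp add: field_simps)?
  have q2: "poly (pderiv (pderiv Q)) 1 = -24/7 * (\<alpha> - 1)"
    unfolding Q_def sum4 a_def by (simp add: Le0 Le1 Le1' Le2 Le3 Le4 algebra_simps pderiv_add pderiv_smult pderiv_pCons) (simp add: field_simps)?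
  have "(\<alpha> - 1)^2 > 0" using assms by simp
  moreover have "192/49 * (\<alpha> - 1)^2 \<le> 2304/1225 * (\<alpha> - 1)^2"
    using L unfolding q0 q1 q2 by (simp add: power2_eq_square algebra_simps)
  ultimately show False by linarith
qed

end
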